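(* In the setting described in the context, fix $n\ge 1$, $\tau>0$ and a point ${\bf y}\in\Omega$, and assume that the $nm\times nm$ data-driven mass matrix ${\bf M}$ is symmetric positive definite with block Cholesky factorization ${\bf M}={\bf R}^T{\bf R}$, ${\bf R}$ block upper triangular. Then for every $j=0,\ldots,n-1$ the estimated internal wave evaluated at the sensor locations and at time $t_j=j\tau$ satisfies \[ \big(g(t_j,{\bf x}_1;{\bf y}),\ldots,g(t_j,{\bf x}_m;{\bf y})\big)={\bf V}_o({\bf y})\,{\bf R}\,{\bf e}_j , \] where ${\bf e}_j\in\mathbb{R}^{nm\times m}$ is the $(j+1)$-th column block (of width $m$) of the $nm\times nm$ identity matrix.
   Context: Let $\Omega\subset\mathbb{R}^d$ be a bounded domain whose boundary is split into an "accessible" part $\partial\Omega_{\rm ac}$ (homogeneous Neumann condition) and an "inaccessible" part $\partial\Omega_{\rm inac}=\partial\Omega\setminus\partial\Omega_{\rm ac}$ (homogeneous Dirichlet condition). For a positive wave speed $c({\bf x})$ let $A(c)=-c({\bf x})\Delta\big[c({\bf x})\,\cdot\,\big]$ with these boundary conditions; it is self-adjoint and positive on $L^2(\Omega)$, with eigenvalues $0<\theta_1\le\theta_2\le\cdots\to\infty$ and $L^2(\Omega)$-orthonormal eigenfunctions $y_l$. Functions of $A(c)$ are defined spectrally: $h(A(c))\phi=\sum_l h(\theta_l)\,y_l\,\langle y_l,\phi\rangle$, and for a Dirac mass $h(A(c))\delta_{\bf z}({\bf x})=\sum_l h(\theta_l)y_l({\bf x})y_l({\bf z})$. The pulse $f(t)$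 is real, even, supported in a short interval, with Fourier transform $\hat f(\omega)=\int f(t)e^{i\omega t}dt\ge 0$ that is band-limited (so all the spectral sums involving $\hat f$ are finite). Sensors are at points ${\bf x}_1,\ldots,{\bf x}_m\in\Omega$. Sensor functions: $\delta^f_{{\bf x}_s}=\hat f^{1/2}(\sqrt{A(c)})\delta_{{\bf x}_s}$, grouped in the row vector $\boldsymbol\delta^f({\bf x})=(\delta^f_{{\bf x}_1}({\bf x}),\ldots,\delta^f_{{\bf x}_m}({\bf x}))$. Snapshots: ${\bf u}_j({\bf x})=\cos(j\tau\sqrt{A(c)})\boldsymbol\delta^f({\bf x})$ ($m$-dimensional row vectors), ${\bf U}({\bf x})=({\bf u}_0({\bf x}),\ldots,{\bf u}_{n-1}({\bf x}))$. Data matrices: ${\bf D}_j=\int_\Omega\boldsymbol\delta^f({\bf x})^T{\bf u}_j({\bf x})\,d{\bf x}\in\mathbb{R}^{m\times m}$, $j=0,\ldots,2n-1$ (their $(r,s)$ entries are the even-in-time extension of the wave emitted at ${\bf x}_s$ and recorded at ${\bf x}_r$ at time $j\tau$). The mass matrix ${\bf M}\in\mathbb{R}^{nm\times nm}$ has $m\times m$ blocks ${\bf M}_{j,l}=\tfrac12({\bf D}_{j+l}+{\bf D}_{|j-l|})$, $j,l=0,\ldots,n-1$ (equivalently ${\bf M}=\int_\Omega{\bf U}^T{\bf U}\,d{\bf x}$). With ${\bf M}={\bf R}^T{\bf R}$, the orthonormal snapshots are ${\bf V}({\bf x})={\bf U}({\bf x}){\bf R}^{-1}=({\bf v}_0({\bf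 x}),\ldots,{\bf v}_{n-1}({\bf x}))$. A known reference wave speed $c_o({\bf x})$ gives, by the same construction with $c$ replaced by $c_o$, snapshots ${\bf U}_o$, Cholesky factor ${\bf R}_o$ of its mass matrix, and orthonormal snapshots ${\bf V}_o({\bf x})={\bf U}_o({\bf x}){\bf R}_o^{-1}$. The ROM point spread function is $\delta^{\rm ROM}_{\bf y}({\bf x})={\bf V}({\bf x}){\bf V}_o({\bf y})^T=\sum_{j=0}^{n-1}{\bf v}_j({\bf x}){\bf v}_{o,j}({\bf y})^T$, and the estimated internal wave is $g(t,{\bf x};{\bf y})=\cos(t\sqrt{A(c)})\,\hat f^{1/2}(\sqrt{A(c)})\,\delta^{\rm ROM}_{\bf y}({\bf x})$. *)

theory Defs
  imports "HOL-Analysis.Analysis" "Jordan_Normal_Form.Matrix"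
begin

text \<open>
  The operator A(c) is represented through its spectral data: eigenvalues
  th :: nat => real (th 0 <= th 1 <= ...) and L2(Omega)-orthonormal eigenfunctions
  ef :: nat => 'a => real.  All functions of A(c) are defined spectrally.
\<close>

definition spectral_system :: "'a::euclidean_space set \<Rightarrow> (nat \<Rightarrow> real) \<Rightarrow> (nat \<Rightarrow> 'a \<Rightarrow> real) \<Rightarrow> bool" where
  "spectral_system \<Omega> th ef \<longleftrightarrow>
     (\<forall>l. 0 < th l) \<and> mono th \<and> filterlim th at_top sequentially \<and>
     (\<forall>k l. integrable (lebesgue_on \<Omega>) (\<lambda>x. ef k x * ef l x) \<and>
            integral\<^sup>L (lebesgue_on \<Omega>) (\<lambda>x. ef k x * ef l x) = (if k = l then 1 else 0))"

definition spec_op :: "'a::euclidean_space set \<Rightarrow> (nat \<Rightarrow> real) \<Rightarrow> (nat \<Rightarrow> 'a \<Rightarrow> real)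
    \<Rightarrow> (real \<Rightarrow> real) \<Rightarrow> ('a \<Rightarrow> real) \<Rightarrow> 'a \<Rightarrow> real" where
  "spec_op \<Omega> th ef h \<phi> x =
     (\<Sum>l. h (th l) * ef l x * integral\<^sup>L (lebesgue_on \<Omega>) (\<lambda>z. ef l z * \<phi> z))"

text \<open>h(A) delta_z (x) = sum_l h(theta_l) y_l(x) y_l(z)\<close>
definition spec_dirac :: "(nat \<Rightarrow> real) \<Rightarrow> (nat \<Rightarrow> 'a \<Rightarrow> real) \<Rightarrow> (real \<Rightarrow> real) \<Rightarrow> 'a \<Rightarrow> 'a \<Rightarrow> real" where
  "spec_dirac th ef h z x = (\<Sum>l. h (th l) * ef l x * ef l z)"

text \<open>sensor function delta^f_{x_s} = fhat^{1/2}(sqrt A) delta_{x_s}; sensors indexed s = 0..m-1\<close>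
definition sensor_fun :: "(nat \<Rightarrow> real) \<Rightarrow> (nat \<Rightarrow> 'a \<Rightarrow> real) \<Rightarrow> (real \<Rightarrow> real) \<Rightarrow> (nat \<Rightarrow> 'a)
    \<Rightarrow> nat \<Rightarrow> 'a \<Rightarrow> real" where
  "sensor_fun th ef fhat xs s = spec_dirac th ef (\<lambda>w. sqrt (fhat (sqrt w))) (xs s)"

definition snapshot :: "'a::euclidean_space set \<Rightarrow> (nat \<Rightarrow> real) \<Rightarrow> (nat \<Rightarrow> 'a \<Rightarrow> real)
    \<Rightarrow> (real \<Rightarrow> real) \<Rightarrow> real \<Rightarrow> (nat \<Rightarrow> 'a) \<Rightarrow> nat \<Rightarrow> nat \<Rightarrow> 'a \<Rightarrow> real" where
  "snapshot \<Omega> th ef fhat \<tau> xs j s =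
     spec_op \<Omega> th ef (\<lambda>w. cos (real j * \<tau> * sqrt w)) (sensor_fun th ef fhat xs s)"

definition data_mat :: "'a::euclidean_space set \<Rightarrow> (nat \<Rightarrow> real) \<Rightarrow> (nat \<Rightarrow> 'a \<Rightarrow> real)
    \<Rightarrow> (real \<Rightarrow> real) \<Rightarrow> real \<Rightarrow> (nat \<Rightarrow> 'a) \<Rightarrow> nat \<Rightarrow> nat \<Rightarrow> real mat" where
  "data_mat \<Omega> th ef fhat \<tau> xs m j = Matrix.mat m m (\<lambda>(r, s).
     integral\<^sup>L (lebesgue_on \<Omega>) (\<lambda>x. sensor_fun th ef fhat xs r x * snapshot \<Omega> th ef fhat \<tau> xs j s x))"

text \<open>mass matrix, blocks M_{j,l} = (D_{j+l} + D_{|j-l|})/2; global index a = j*m + r\<close>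
definition mass_mat :: "'a::euclidean_space set \<Rightarrow> (nat \<Rightarrow> real) \<Rightarrow> (nat \<Rightarrow> 'a \<Rightarrow> real)
    \<Rightarrow> (real \<Rightarrow> real) \<Rightarrow> real \<Rightarrow> (nat \<Rightarrow> 'a) \<Rightarrow> nat \<Rightarrow> nat \<Rightarrow> real mat" where
  "mass_mat \<Omega> th ef fhat \<tau> xs m n = Matrix.mat (n * m) (n * m) (\<lambda>(a, b).
     (data_mat \<Omega> th ef fhat \<tau> xs m (a div m + b div m) $$ (a mod m, b mod m)
      + data_mat \<Omega> th ef fhat \<tau> xs m (max (a div m) (b div m) - min (a div m) (b div m))
          $$ (a mod m, b mod m)) / 2)"

definition snap_row :: "'a::euclidean_space set \<Rightarrow> (nat \<Rightarrow> real) \<Rightarrow> (nat \<Rightarrow> 'a \<Rightarrow> real)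
    \<Rightarrow> (real \<Rightarrow> real) \<Rightarrow> real \<Rightarrow> (nat \<Rightarrow> 'a) \<Rightarrow> nat \<Rightarrow> nat \<Rightarrow> 'a \<Rightarrow> real mat" where
  "snap_row \<Omega> th ef fhat \<tau> xs m n x =
     Matrix.mat 1 (n * m) (\<lambda>(_, b). snapshot \<Omega> th ef fhat \<tau> xs (b div m) (b mod m) x)"

definition mat_inv :: "real mat \<Rightarrow> real mat" where
  "mat_inv R = (SOME S. S \<in> carrier_mat (dim_row R) (dim_row R) \<and> inverts_mat R S \<and> inverts_mat S R)"

definition orth_snap :: "'a::euclidean_space set \<Rightarrow> (nat \<Rightarrow> real) \<Rightarrow> (nat \<Rightarrow> 'a \<Rightarrow> real)
    \<Rightarrow> (real \<Rightarrow> real) \<Rightarrow> real \<Rightarrow> (nat \<Rightarrow> 'a) \<Rightarrow> nat \<Rightarrow> nat \<Rightarrow> real mat \<Rightarrow> 'a \<Rightarrow> real mat" where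
  "orth_snap \<Omega> th ef fhat \<tau> xs m n R x = snap_row \<Omega> th ef fhat \<tau> xs m n x * mat_inv R"

definition sym_pos_def :: "real mat \<Rightarrow> bool" where
  "sym_pos_def M \<longleftrightarrow> M \<in> carrier_mat (dim_row M) (dim_row M) \<and> transpose_mat M = M \<and>
     (\<forall>v \<in> carrier_vec (dim_row M). v \<noteq> 0\<^sub>v (dim_row M) \<longrightarrow> v \<bullet> (M *\<^sub>v v) > 0)"

definition block_upper_triangular :: "nat \<Rightarrow> real mat \<Rightarrow> bool" where
  "block_upper_triangular m R \<longleftrightarrow>
     (\<forall>a < dim_row R. \<forall>b < dim_col R. b div m < a div m \<longrightarrow> R $$ (a, b) = 0)"

definition rom_psf :: "'a::euclidean_space set \<Rightarrow> (nat \<Rightarrow> real) \<Rightarrow> (nat \<Rightarrow> 'a \<Rightarrow> real)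
    \<Rightarrow> (nat \<Rightarrow> real) \<Rightarrow> (nat \<Rightarrow> 'a \<Rightarrow> real)
    \<Rightarrow> (real \<Rightarrow> real) \<Rightarrow> real \<Rightarrow> (nat \<Rightarrow> 'a) \<Rightarrow> nat \<Rightarrow> nat \<Rightarrow> real mat \<Rightarrow> real mat
    \<Rightarrow> 'a \<Rightarrow> 'a \<Rightarrow> real" where
  "rom_psf \<Omega> th ef tho efo fhat \<tau> xs m n R Ro y x =
     (orth_snap \<Omega> th ef fhat \<tau> xs m n R x
        * transpose_mat (orth_snap \<Omega> tho efo fhat \<tau> xs m n Ro y)) $$ (0, 0)"

definition internal_wave :: "'a::euclidean_space set \<Rightarrow> (nat \<Rightarrow> real) \<Rightarrow> (nat \<Rightarrow> 'a \<Rightarrow> real)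
    \<Rightarrow> (nat \<Rightarrow> real) \<Rightarrow> (nat \<Rightarrow> 'a \<Rightarrow> real)
    \<Rightarrow> (real \<Rightarrow> real) \<Rightarrow> real \<Rightarrow> (nat \<Rightarrow> 'a) \<Rightarrow> nat \<Rightarrow> nat \<Rightarrow> real mat \<Rightarrow> real mat
    \<Rightarrow> real \<Rightarrow> 'a \<Rightarrow> 'a \<Rightarrow> real" where
  "internal_wave \<Omega> th ef tho efo fhat \<tau> xs m n R Ro t x y =
     spec_op \<Omega> th ef (\<lambda>w. cos (t * sqrt w) * sqrt (fhat (sqrt w)))
       (rom_psf \<Omega> th ef tho efo fhat \<tau> xs m n R Ro y) x"

definition block_unit :: "nat \<Rightarrow> nat \<Rightarrow> nat \<Rightarrow> real mat" where
  "block_unit m n j = Matrix.mat (n * m) m (\<lambda>(a, b). if a = j * m + b then 1 else 0)"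

end

theory Submission
  imports Defs "Jordan_Normal_Form.Determinant"
begin

definition orthon :: "'a::euclidean_space set \<Rightarrow> (nat \<Rightarrow> 'a \<Rightarrow> real) \<Rightarrow> bool" where
  "orthon \<Omega> ef \<longleftrightarrow> (\<forall>k l. integrable (lebesgue_on \<Omega>) (\<lambda>x. ef k x * ef l x) \<and>
            integral\<^sup>L (lebesgue_on \<Omega>) (\<lambda>x. ef k x * ef l x) = (if k = l then 1 else 0))"

lemma L0:
  assumes o: "orthon \<Omega> ef"
  shows "integrable (lebesgue_on \<Omega>) (\<lambda>x. ef k x * (\<Sum>l<N. b l * ef l x))"
    "integral\<^sup>L (lebesgue_on \<Omega>) (\<lambda>x. ef k x * (\<Sum>l<N. b l * ef l x)) = (if k < N then b k else 0)"
proof -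
  have eq: "(\<lambda>x. ef k x * (\<Sum>l<N. b l * ef l x)) = (\<lambda>x. \<Sum>l<N. b l * (ef k x * ef l x))"
    by (simp add: sum_distrib_left mult.commute mult.left_commute)
  have i: "\<And>l. integrable (lebesgue_on \<Omega>) (\<lambda>x. b l * (ef k x * ef l x))"
    using o unfolding orthon_def by auto
  show "integrable (lebesgue_on \<Omega>) (\<lambda>x. ef k x * (\<Sum>l<N. b l * ef l x))"
    unfolding eq using i by auto
  have "integral\<^sup>L (lebesgue_on \<Omega>) (\<lambda>x. ef k x * (\<Sum>l<N. b l * ef l x))
      = (\<Sum>l<N. b l * (if k = l then 1 else 0))"
    unfolding eq using i o unfolding orthon_def by (simp add: integral_sum)
  also have "\<dots> = (if k < N then b k else 0)"
    by (simp add: if_distrib sum.delta' cong: if_cong)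
  finally show "integral\<^sup>L (lebesgue_on \<Omega>) (\<lambda>x. ef k x * (\<Sum>l<N. b l * ef l x)) = (if k < N then b k else 0)" .
qed

lemma L1:
  assumes o: "orthon \<Omega> ef"
  shows "integral\<^sup>L (lebesgue_on \<Omega>) (\<lambda>x. (\<Sum>l<N. a l * ef l x) * (\<Sum>k<N. b k * ef k x))
     = (\<Sum>l<N. a l * b l)"
proof -
  have eq: "(\<lambda>x. (\<Sum>l<N. a l * ef l x) * (\<Sum>k<N. b k * ef k x))
     = (\<lambda>x. \<Sum>l<N. a l * (ef l x * (\<Sum>k<N. b k * ef k x)))"
    by (simp add: sum_distrib_right mult.assoc)
  show ?thesis unfolding eq using L0[OF o]
    by (simp add: integral_sum)
qed

lemma spec_fin:
  assumes o: "orthon \<Omega> ef"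
  shows "spec_op \<Omega> th ef h (\<lambda>x. \<Sum>l<N. b l * ef l x) x = (\<Sum>l<N. h (th l) * b l * ef l x)"
proof -
  have "spec_op \<Omega> th ef h (\<lambda>x. \<Sum>l<N. b l * ef l x) x
     = (\<Sum>l. h (th l) * ef l x * (if l < N then b l else 0))"
    unfolding spec_op_def using L0(2)[OF o] by simp
  also have "\<dots> = (\<Sum>l<N. h (th l) * ef l x * (if l < N then b l else 0))"
    by (rule suminf_finite) auto
  also have "\<dots> = (\<Sum>l<N. h (th l) * b l * ef l x)"
    by (rule sum.cong) auto
  finally show ?thesis .
qed

lemma chol_inv:
  assumes R: "R \<in> carrier_mat k k" and spd: "sym_pos_def (transpose_mat R * R)"
  shows "mat_inv R \<in> carrier_mat k k \<and> R * mat_inv R = 1\<^sub>m k"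
proof -
  have "Determinant.det R \<noteq> 0"
  proof
    assume "Determinant.det R = 0"
    then obtain v where v: "v \<in> carrier_vec k" "v \<noteq> 0\<^sub>v k" "R *\<^sub>v v = 0\<^sub>v k"
      using det_0_iff_vec_prod_zero[OF R] by auto
    have "(transpose_mat R * R) *\<^sub>v v = transpose_mat R *\<^sub>v (R *\<^sub>v v)"
      using R v by (auto intro: assoc_mult_mat_vec)
    also have "\<dots> = 0\<^sub>v k" using v R by auto
    finally have "v \<bullet> ((transpose_mat R * R) *\<^sub>v v) = 0" using v by simp
    moreover have "v \<bullet> ((transpose_mat R * R) *\<^sub>v v) > 0"
      using spd v R unfolding sym_pos_def_def by auto
    ultimately show False by simp
  qed
  from det_non_zero_imp_unit[OF R this, unfolded Units_def, of "()"]
  obtain B where B: "B \<in> carrier_mat k k" and BA: "B * R = 1\<^sub>m k" and AB: "R * B = 1\<^sub>m k"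
    by (auto simp: ring_mat_def)
  have ex: "\<exists>S. S \<in> carrier_mat (dim_row R) (dim_row R) \<and> inverts_mat R S \<and> inverts_mat S R"
    using B BA AB R unfolding inverts_mat_def by auto
  have "mat_inv R \<in> carrier_mat (dim_row R) (dim_row R) \<and> inverts_mat R (mat_inv R) \<and> inverts_mat (mat_inv R) R"
    unfolding mat_inv_def by (rule someI_ex[OF ex])
  then show ?thesis using R unfolding inverts_mat_def by auto
qed


lemma cos_lemma:
  "cos (real (p + q) * \<tau> * s) + cos (real (max p q - min p q) * \<tau> * s)
    = 2 * cos (real p * \<tau> * s) * cos (real q * \<tau> * s)"
proof (cases "p \<le> q")
  case True
  then have "real (max p q - min p q) * \<tau> * s = real q * \<tau> * s - real p * \<tau> * s"
    by (simp add: of_nat_diff algebra_simps)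
  moreover have "real (p + q) * \<tau> * s = real q * \<tau> * s + real p * \<tau> * s"
    by (simp add: algebra_simps)
  ultimately show ?thesis by (simp add: cos_add cos_diff)
next
  case False
  then have "real (max p q - min p q) * \<tau> * s = real p * \<tau> * s - real q * \<tau> * s"
    by (simp add: of_nat_diff algebra_simps)
  moreover have "real (p + q) * \<tau> * s = real p * \<tau> * s + real q * \<tau> * s"
    by (simp add: algebra_simps)
  ultimately show ?thesis by (simp add: cos_add cos_diff)
qed

theorem proposition1:
  fixes \<Omega> :: "'a::euclidean_space set"
    and th tho :: "nat \<Rightarrow> real" and ef efo :: "nat \<Rightarrow> 'a \<Rightarrow> real"
    and fhat :: "real \<Rightarrow> real" and \<tau> :: real and xs :: "nat \<Rightarrow> 'a"
    and m n j :: nat and R Ro :: "real mat" and y :: 'a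
  assumes dom: "open \<Omega>" "bounded \<Omega>" "connected \<Omega>" "\<Omega> \<noteq> {}"
    and sys: "spectral_system \<Omega> th ef"
    and sys_o: "spectral_system \<Omega> tho efo"
    and fhat_nonneg: "\<forall>w. 0 \<le> fhat w"
    and fhat_even: "\<forall>w. fhat (- w) = fhat w"
    and fhat_bl: "\<exists>B. \<forall>w. B < \<bar>w\<bar> \<longrightarrow> fhat w = 0"
    and sensors: "\<forall>s < m. xs s \<in> \<Omega>"
    and n_pos: "1 \<le> n" and tau_pos: "0 < \<tau>" and y_in: "y \<in> \<Omega>"
    and M_spd: "sym_pos_def (mass_mat \<Omega> th ef fhat \<tau> xs m n)"
    and R_dim: "R \<in> carrier_mat (n * m) (n * m)"
    and R_chol: "mass_mat \<Omega> th ef fhat \<tau> xs m n = transpose_mat R * R"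
    and R_upper: "block_upper_triangular m R"
    and Mo_spd: "sym_pos_def (mass_mat \<Omega> tho efo fhat \<tau> xs m n)"
    and Ro_dim: "Ro \<in> carrier_mat (n * m) (n * m)"
    and Ro_chol: "mass_mat \<Omega> tho efo fhat \<tau> xs m n = transpose_mat Ro * Ro"
    and Ro_upper: "block_upper_triangular m Ro"
    and j_lt: "j < n"
  shows "Matrix.mat 1 m (\<lambda>(_, r). internal_wave \<Omega> th ef tho efo fhat \<tau> xs m n R Ro
            (real j * \<tau>) (xs r) y)
         = orth_snap \<Omega> tho efo fhat \<tau> xs m n Ro y * R * block_unit m n j"
proof -
  have o: "orthon \<Omega> ef" using sys unfolding spectral_system_def orthon_def by blast
  define c where "c l = sqrt (fhat (sqrt (th l)))" for l
  obtain B where B: "\<forall>w. B < \<bar>w\<bar> \<longrightarrow> fhat w = 0" using fhat_bl by blast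
  have "\<forall>\<^sub>F l in sequentially. (\<bar>B\<bar> + 1)\<^sup>2 \<le> th l"
    using sys unfolding spectral_system_def filterlim_at_top by blast
  then obtain N where N0: "\<And>l. l \<ge> N \<Longrightarrow> (\<bar>B\<bar> + 1)\<^sup>2 \<le> th l"
    unfolding eventually_sequentially by blast
  have cN: "c l = 0" if "l \<ge> N" for l
  proof -
    have "sqrt ((\<bar>B\<bar> + 1)\<^sup>2) \<le> sqrt (th l)" using N0[OF that] by (rule real_sqrt_le_mono)
    then have "\<bar>B\<bar> + 1 \<le> sqrt (th l)" by simp
    then have "B < \<bar>sqrt (th l)\<bar>" by linarith
    then show ?thesis using B unfolding c_def by simp
  qed
  have sensor: "sensor_fun th ef fhat xs s = (\<lambda>x. \<Sum>l<N. (c l * ef l (xs s)) * ef l x)" for s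
  proof
    fix x
    have "sensor_fun th ef fhat xs s x = (\<Sum>l. c l * ef l x * ef l (xs s))"
      unfolding sensor_fun_def spec_dirac_def c_def by simp
    also have "\<dots> = (\<Sum>l<N. c l * ef l x * ef l (xs s))"
      by (rule suminf_finite) (auto simp: cN)
    also have "\<dots> = (\<Sum>l<N. (c l * ef l (xs s)) * ef l x)"
      by (simp add: algebra_simps)
    finally show "sensor_fun th ef fhat xs s x = (\<Sum>l<N. (c l * ef l (xs s)) * ef l x)" .
  qed
  have snap: "snapshot \<Omega> th ef fhat \<tau> xs k s
     = (\<lambda>x. \<Sum>l<N. (cos (real k * \<tau> * sqrt (th l)) * (c l * ef l (xs s))) * ef l x)" for k s
    unfolding snapshot_def sensor by (rule ext, subst spec_fin[OF o]) (simp add: mult.assoc)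
  have data: "data_mat \<Omega> th ef fhat \<tau> xs m p $$ (r, s)
     = (\<Sum>l<N. (c l * ef l (xs r)) * (cos (real p * \<tau> * sqrt (th l)) * (c l * ef l (xs s))))"
    if "r < m" "s < m" for p r s
    using that unfolding data_mat_def sensor snap by (simp add: L1[OF o])
  have mass: "mass_mat \<Omega> th ef fhat \<tau> xs m n $$ (a, b)
     = (\<Sum>l<N. (c l * ef l (xs (a mod m))) * (c l * ef l (xs (b mod m)))
         * cos (real (a div m) * \<tau> * sqrt (th l)) * cos (real (b div m) * \<tau> * sqrt (th l)))"
    if "a < n * m" "b < n * m" for a b
  proof -
    have m0: "0 < m" using that by (cases m) auto
    have "mass_mat \<Omega> th ef fhat \<tau> xs m n $$ (a, b)
      = (\<Sum>l<N. (c l * ef l (xs (a mod m))) * (c l * ef l (xs (b mod m)))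
         * ((cos (real (a div m + b div m) * \<tau> * sqrt (th l))
           + cos (real (max (a div m) (b div m) - min (a div m) (b div m)) * \<tau> * sqrt (th l))) / 2))"
      using that m0 unfolding mass_mat_def
      by (simp add: data sum.distrib[symmetric] sum_divide_distrib algebra_simps)
    also have "\<dots> = (\<Sum>l<N. (c l * ef l (xs (a mod m))) * (c l * ef l (xs (b mod m)))
         * cos (real (a div m) * \<tau> * sqrt (th l)) * cos (real (b div m) * \<tau> * sqrt (th l)))"
      proof (intro sum.cong refl)
      fix l
      have e: "cos (real (a div m + b div m) * \<tau> * sqrt (th l))
           + cos (real (max (a div m) (b div m) - min (a div m) (b div m)) * \<tau> * sqrt (th l))
           = 2 * cos (real (a div m) * \<tau> * sqrt (th l)) * cos (real (b div m) * \<tau> * sqrt (th l))"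
        by (rule cos_lemma)
      show "c l * ef l (xs (a mod m)) * (c l * ef l (xs (b mod m))) *
         ((cos (real (a div m + b div m) * \<tau> * sqrt (th l))
           + cos (real (max (a div m) (b div m) - min (a div m) (b div m)) * \<tau> * sqrt (th l))) / 2)
         = c l * ef l (xs (a mod m)) * (c l * ef l (xs (b mod m)))
         * cos (real (a div m) * \<tau> * sqrt (th l)) * cos (real (b div m) * \<tau> * sqrt (th l))"
        unfolding e by simp
    qed
    finally show ?thesis .
  qed
  define Ri where "Ri = mat_inv R"
  define Vo where "Vo = orth_snap \<Omega> tho efo fhat \<tau> xs m n Ro y"
  define W where "W = Ri * transpose_mat Vo"
  define w where "w b = W $$ (b, 0)" for b
  define M where "M = mass_mat \<Omega> th ef fhat \<tau> xs m n"
  have Ri: "Ri \<in> carrier_mat (n * m) (n * m)" and RRi: "R * Ri = 1\<^sub>m (n * m)"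
    using chol_inv[OF R_dim] M_spd R_chol unfolding Ri_def by auto
  have Roi: "mat_inv Ro \<in> carrier_mat (n * m) (n * m)"
    using chol_inv[OF Ro_dim] Mo_spd Ro_chol by auto
  have U: "snap_row \<Omega> th' ef' fhat \<tau> xs m n x \<in> carrier_mat 1 (n * m)" for th' ef' x
    unfolding snap_row_def by simp
  have Vo: "Vo \<in> carrier_mat 1 (n * m)"
    unfolding Vo_def orth_snap_def using mult_carrier_mat[OF U Roi] by simp
  have W: "W \<in> carrier_mat (n * m) 1" unfolding W_def using Ri Vo by auto
  have M: "M \<in> carrier_mat (n * m) (n * m)" unfolding M_def mass_mat_def by simp
  have rom: "rom_psf \<Omega> th ef tho efo fhat \<tau> xs m n R Ro y x
     = (\<Sum>b<n * m. snapshot \<Omega> th ef fhat \<tau> xs (b div m) (b mod m) x * w b)" for x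
  proof -
    have "rom_psf \<Omega> th ef tho efo fhat \<tau> xs m n R Ro y x
        = (snap_row \<Omega> th ef fhat \<tau> xs m n x * Ri * transpose_mat Vo) $$ (0, 0)"
      unfolding rom_psf_def orth_snap_def Ri_def Vo_def by simp
    also have "\<dots> = (snap_row \<Omega> th ef fhat \<tau> xs m n x * W) $$ (0, 0)"
      unfolding W_def using U Ri Vo by (subst assoc_mult_mat) auto
    also have "\<dots> = (\<Sum>b<n * m. snapshot \<Omega> th ef fhat \<tau> xs (b div m) (b mod m) x * w b)"
      using W unfolding w_def snap_row_def
      by (simp add: scalar_prod_def atLeast0LessThan)
    finally show ?thesis .
  qed
  define \<beta> where "\<beta> l = (\<Sum>b<n * m. w b * (cos (real (b div m) * \<tau> * sqrt (th l)) * (c l * ef l (xs (b mod m)))))" for l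
  have rom2: "rom_psf \<Omega> th ef tho efo fhat \<tau> xs m n R Ro y = (\<lambda>x. \<Sum>l<N. \<beta> l * ef l x)"
  proof
    fix x
    show "rom_psf \<Omega> th ef tho efo fhat \<tau> xs m n R Ro y x = (\<Sum>l<N. \<beta> l * ef l x)"
      unfolding rom snap \<beta>_def sum_distrib_right
      by (subst sum.swap) (simp add: algebra_simps)
  qed
  have iw: "internal_wave \<Omega> th ef tho efo fhat \<tau> xs m n R Ro (real j * \<tau>) (xs r) y
     = (\<Sum>l<N. cos (real j * \<tau> * sqrt (th l)) * c l * \<beta> l * ef l (xs r))" for r
    unfolding internal_wave_def rom2 spec_fin[OF o] c_def by simp
  have MW: "(M * W) $$ (j * m + r, 0)
     = internal_wave \<Omega> th ef tho efo fhat \<tau> xs m n R Ro (real j * \<tau>) (xs r) y" if r: "r < m" for r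
  proof -
    have a: "j * m + r < n * m" using j_lt r
      by (metis add_lessD1 less_imp_le_nat mult_le_mono1 nat_add_left_cancel_less
          less_le_trans mult_Suc add.commute Suc_le_eq)
    have dm: "(j * m + r) div m = j" "(j * m + r) mod m = r" using r by auto
    have "(M * W) $$ (j * m + r, 0) = (\<Sum>b<n * m. M $$ (j * m + r, b) * w b)"
      using M W a unfolding w_def by (simp add: scalar_prod_def atLeast0LessThan)
    also have "\<dots> = (\<Sum>b<n * m. (\<Sum>l<N. (c l * ef l (xs r)) * (c l * ef l (xs (b mod m)))
         * cos (real j * \<tau> * sqrt (th l)) * cos (real (b div m) * \<tau> * sqrt (th l))) * w b)"
      by (intro sum.cong refl) (use a r in \<open>simp add: M_def mass dm\<close>)
    also have "\<dots> = (\<Sum>l<N. cos (real j * \<tau> * sqrt (th l)) * c l * \<beta> l * ef l (xs r))"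
      unfolding \<beta>_def sum_distrib_right sum_distrib_left
      by (subst sum.swap) (simp add: algebra_simps)
    finally show ?thesis using iw by simp
  qed
  have MW2: "M * W = transpose_mat R * transpose_mat Vo"
  proof -
    have "M * W = (transpose_mat R * R) * (Ri * transpose_mat Vo)"
      unfolding M_def R_chol W_def ..
    also have "\<dots> = transpose_mat R * (R * (Ri * transpose_mat Vo))"
      using R_dim Ri Vo by (subst assoc_mult_mat) auto
    also have "R * (Ri * transpose_mat Vo) = (R * Ri) * transpose_mat Vo"
      using R_dim Ri Vo by (subst assoc_mult_mat) auto
    also have "\<dots> = transpose_mat Vo" unfolding RRi using Vo by simp
    finally show ?thesis .
  qed
  have TT: "(transpose_mat R * transpose_mat Vo) $$ (a, 0) = (Vo * R) $$ (0, a)" if "a < n * m" for a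
  proof -
    have "transpose_mat R * transpose_mat Vo = transpose_mat (Vo * R)"
      using transpose_mult[OF Vo R_dim] by simp
    then show ?thesis using that Vo R_dim by simp
  qed
  have rhs: "(Vo * R * block_unit m n j) $$ (0, r) = (Vo * R) $$ (0, j * m + r)" if r: "r < m" for r
  proof -
    have a: "j * m + r < n * m" using j_lt r
      by (metis add_lessD1 less_imp_le_nat mult_le_mono1 nat_add_left_cancel_less
          less_le_trans mult_Suc add.commute Suc_le_eq)
    have "(Vo * R * block_unit m n j) $$ (0, r)
        = (\<Sum>b<n * m. (Vo * R) $$ (0, b) * (if b = j * m + r then 1 else 0))"
      using Vo R_dim r unfolding block_unit_def by (simp add: scalar_prod_def atLeast0LessThan)
    also have "\<dots> = (Vo * R) $$ (0, j * m + r)"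
      using a by (simp add: if_distrib sum.delta' cong: if_cong)
    finally show ?thesis .
  qed
  show ?thesis
  proof (rule eq_matI)
    show "dim_row (Matrix.mat 1 m (\<lambda>(_, r). internal_wave \<Omega> th ef tho efo fhat \<tau> xs m n R Ro (real j * \<tau>) (xs r) y))
        = dim_row (orth_snap \<Omega> tho efo fhat \<tau> xs m n Ro y * R * block_unit m n j)"
      using Vo unfolding Vo_def[symmetric] by simp
    show "dim_col (Matrix.mat 1 m (\<lambda>(_, r). internal_wave \<Omega> th ef tho efo fhat \<tau> xs m n R Ro (real j * \<tau>) (xs r) y))
        = dim_col (orth_snap \<Omega> tho efo fhat \<tau> xs m n Ro y * R * block_unit m n j)"
      unfolding block_unit_def by simp
    fix i r assume i: "i < dim_row (orth_snap \<Omega> tho efo fhat \<tau> xs m n Ro y * R * block_unit m n j)"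
      and r: "r < dim_col (orth_snap \<Omega> tho efo fhat \<tau> xs m n Ro y * R * block_unit m n j)"
    have i0: "i = 0" using i Vo unfolding Vo_def[symmetric] by simp
    have rm: "r < m" using r unfolding block_unit_def by simp
    have a: "j * m + r < n * m" using j_lt rm
      by (metis add_lessD1 less_imp_le_nat mult_le_mono1 nat_add_left_cancel_less
          less_le_trans mult_Suc add.commute Suc_le_eq)
    show "Matrix.mat 1 m (\<lambda>(_, r). internal_wave \<Omega> th ef tho efo fhat \<tau> xs m n R Ro (real j * \<tau>) (xs r) y) $$ (i, r)
        = (orth_snap \<Omega> tho efo fhat \<tau> xs m n Ro y * R * block_unit m n j) $$ (i, r)"
      unfolding Vo_def[symmetric] i0 using rm a
      by (simp add: rhs MW[symmetric] MW2 TT)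
  qed
qed

end
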